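(* There exist absolute constants $c>0$ and $\rho_0\in(0,1/2]$ such that, for all $\rho\in(0,\rho_0]$, $n\ge2$, $1\le m\le n-1$ and $s\in\big(0,1/(m\ln(1/\rho))\big]$, $$\mathcal{E}^{\mathrm{TW}}_{m,s}\ge(c/s)^m(1/\rho)^{\lfloor(n+m-1)/2\rfloor}.$$
   Context: $m$-twist system with parameter $\rho$ on $n$ agents: at each time $t$ the agents are relabeled so that their positions satisfy $x_1\le\dots\le x_n$. A partition of $[n]$ into at most $m$ intervals of consecutive indices $[u_{t,l},v_{t,l}]$ (blocks) is chosen. The next sorted positions $y_1\le\dots\le y_n$ satisfy, for every block $[u,v]$ and $i\in[u,v]$, $$(1-\rho)x_u+\rho x_{\min\{i+1,v\}}\le y_i\le\rho x_{\max\{i-1,u\}}+(1-\rho)x_v.$$ The $s$-energy is $\sum_{t\ge0}\sum_l(x_{v_{t,l}}(t)-x_{u_{t,l}}(t))^s$. $\mathcal{E}^{\mathrm{TW}}_{m,s}$ is its supremum over all $m$-twist systems on $n$ agents with initial positions in $[0,1]$. *)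

theory Defs
  imports "HOL-Analysis.Analysis"
begin

text \<open>Agents are indexed 0..n-1 (0-based). Positions at time t: x t :: nat => real,
  always sorted (relabelled). A block is a pair (u,v) of indices with u <= v.\<close>

definition sorted_pos :: "nat \<Rightarrow> (nat \<Rightarrow> real) \<Rightarrow> bool" where
  "sorted_pos n x \<longleftrightarrow> (\<forall>i. Suc i < n \<longrightarrow> x i \<le> x (Suc i))"

definition twist_partition :: "nat \<Rightarrow> nat \<Rightarrow> (nat \<times> nat) list \<Rightarrow> bool" where
  "twist_partition n m P \<longleftrightarrow>
     P \<noteq> [] \<and> length P \<le> m \<and> fst (hd P) = 0 \<and> snd (last P) = n - 1 \<and>
     (\<forall>l<length P. fst (P ! l) \<le> snd (P ! l)) \<and>
     (\<forall>l. Suc l < length P \<longrightarrow> fst (P ! Suc l) = Suc (snd (P ! l)))"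

definition twist_step :: "real \<Rightarrow> (nat \<times> nat) list \<Rightarrow> (nat \<Rightarrow> real) \<Rightarrow> (nat \<Rightarrow> real) \<Rightarrow> bool" where
  "twist_step \<rho> P x y \<longleftrightarrow>
     (\<forall>(u, v) \<in> set P. \<forall>i \<in> {u..v}.
        (1 - \<rho>) * x u + \<rho> * x (min (i + 1) v) \<le> y i \<and>
        y i \<le> \<rho> * x (max (i - 1) u) + (1 - \<rho>) * x v)"

definition twist_system :: "nat \<Rightarrow> nat \<Rightarrow> real \<Rightarrow> (nat \<Rightarrow> nat \<Rightarrow> real) \<Rightarrow> (nat \<Rightarrow> (nat \<times> nat) list) \<Rightarrow> bool" where
  "twist_system n m \<rho> x P \<longleftrightarrow>
     (\<forall>i<n. 0 \<le> x 0 i \<and> x 0 i \<le> 1) \<and>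
     (\<forall>t. sorted_pos n (x t) \<and> twist_partition n m (P t) \<and> twist_step \<rho> (P t) (x t) (x (Suc t)))"

definition s_energy :: "real \<Rightarrow> (nat \<Rightarrow> nat \<Rightarrow> real) \<Rightarrow> (nat \<Rightarrow> (nat \<times> nat) list) \<Rightarrow> ennreal" where
  "s_energy s x P = (\<Sum>t. sum_list (map (\<lambda>(u, v). ennreal ((x t v - x t u) powr s)) (P t)))"

definition E_TW :: "nat \<Rightarrow> real \<Rightarrow> nat \<Rightarrow> real \<Rightarrow> ennreal" where
  "E_TW n \<rho> m s = (SUP xP \<in> {(x, P). twist_system n m \<rho> x P}. s_energy s (fst xP) (snd xP))"

end

theory Submission
  imports Defs
begin



lemma powr_pow_comm: "(x ^ t) powr s = (x powr s) ^ t" for x :: real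
  by (induction t) (simp_all add: powr_mult)

lemma geom_ennreal:
  fixes q :: real assumes "0 \<le> q" "q < 1" and that: "0 \<le> C"
  shows "(\<Sum>t. ennreal (C * q ^ t)) = ennreal (C / (1 - q))"
proof -
  have "(\<lambda>t. C * q ^ t) sums (C * (1 / (1 - q)))"
    using geometric_sums[of q] assms by (intro sums_mult) auto
  then show ?thesis using assms that by (subst suminf_ennreal_eq[where x="C * (1/(1-q))"]) auto
qed

lemma one_minus_powr_le:
  fixes l s :: real assumes "0 < l" "l \<le> 1" "0 < s"
  shows "1 - l powr s \<le> s * (1 / l - 1)"
proof -
  have "l powr s = exp (s * ln l)" using assms by (simp add: powr_def)
  also have "\<dots> \<ge> 1 + s * ln l" by (rule exp_ge_add_one_self)
  finally have 1: "1 - l powr s \<le> - s * ln l" by simp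
  have "ln (1/l) \<le> 1/l - 1" using assms by (intro ln_le_minus_one) auto
  hence "- ln l \<le> 1/l - 1" using assms by (simp add: ln_div)
  hence "s * (- ln l) \<le> s * (1/l - 1)" using assms by (intro mult_left_mono) auto
  thus ?thesis using 1 by simp
qed

lemma suminf_trunc:
  fixes f :: "nat \<Rightarrow> ennreal"
  assumes "0 < E" "ennreal E \<le> suminf f"
  shows "\<exists>T. ennreal (E/2) \<le> (\<Sum>t<T. f t)"
proof -
  have "ennreal (E/2) < ennreal E" using assms by (simp add: ennreal_lessI)
  also have "\<dots> \<le> (SUP n. sum f {..<n})" using assms suminf_eq_SUP by metis
  finally show ?thesis by (auto simp: less_SUP_iff intro: less_imp_le)
qed

lemma suminf_group:
  fixes f :: "nat \<Rightarrow> ennreal" 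
  shows "(\<Sum>j. \<Sum>r<p. f (r + j * p)) \<le> suminf f"
proof -
  have "(\<Sum>j<N. \<Sum>r<p. f (r + j * p)) \<le> suminf f" for N
  proof -
    have "(\<Sum>j<N. \<Sum>r<p. f (r + j * p)) = sum f {..<N*p}" by (simp add: sum_mult_product)
    also have "\<dots> \<le> (SUP n. sum f {..<n})" by (rule SUP_upper) auto
    finally show ?thesis by (simp add: suminf_eq_SUP)
  qed
  thus ?thesis by (simp add: suminf_eq_SUP SUP_least)
qed




definition dd :: "nat \<Rightarrow> real \<Rightarrow> nat \<Rightarrow> real" where
  "dd n \<rho> i = (if i = 0 then 0 else 2 * \<rho> ^ (n div 2 - i) / (1 + \<rho>))"

definition zz :: "nat \<Rightarrow> real \<Rightarrow> nat \<Rightarrow> real" where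
  "zz n \<rho> i = (if 2*i+1 < n then -1 + dd n \<rho> i else if 2*i+1 = n then 0 else 1 - dd n \<rho> (n-1-i))"

context
  fixes n :: nat and \<rho> :: real
  assumes n2: "2 \<le> n" and rp: "0 < \<rho>" and r8: "\<rho> \<le> 1/8"
begin

lemma dd_nonneg: "0 \<le> dd n \<rho> i"
  using rp by (simp add: dd_def)

lemma dd_mono: "i \<le> j \<Longrightarrow> dd n \<rho> i \<le> dd n \<rho> j"
proof -
  assume ij: "i \<le> j"
  show ?thesis
  proof (cases "i = 0")
    case True thus ?thesis using dd_nonneg by (simp add: dd_def)
  next
    case False
    have "\<rho> ^ (n div 2 - i) \<le> \<rho> ^ (n div 2 - j)"
      using rp r8 ij by (intro power_decreasing) auto
    thus ?thesis using False ij rp by (simp add: dd_def divide_right_mono)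
  qed
qed

lemma dd_small: "2*i+1 < n \<Longrightarrow> dd n \<rho> i \<le> 2*\<rho>/(1+\<rho>)"
proof -
  assume h: "2*i+1 < n"
  show ?thesis
  proof (cases "i = 0")
    case True thus ?thesis using rp by (simp add: dd_def)
  next
    case False
    have "n div 2 - i \<ge> 1" using h by linarith
    hence "\<rho> ^ (n div 2 - i) \<le> \<rho> ^ 1" using rp r8 by (intro power_decreasing) auto
    thus ?thesis using False rp by (simp add: dd_def divide_right_mono)
  qed
qed

lemma dd_le1: "2*i+1 < n \<Longrightarrow> dd n \<rho> i \<le> 1"
proof -
  assume "2*i+1 < n"
  hence "dd n \<rho> i \<le> 2*\<rho>/(1+\<rho>)" by (rule dd_small)
  also have "\<dots> \<le> 1" using rp r8 by (simp add: field_simps)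
  finally show ?thesis .
qed

lemma dd_step: "1 \<le> i \<Longrightarrow> i + 1 \<le> n div 2 \<Longrightarrow> dd n \<rho> i = \<rho> * dd n \<rho> (i+1)"
proof -
  assume "1 \<le> i" "i + 1 \<le> n div 2"
  hence "n div 2 - i = Suc (n div 2 - (i+1))" by linarith
  thus ?thesis using \<open>1 \<le> i\<close> by (simp add: dd_def)
qed

lemma zz_anti: "i < n \<Longrightarrow> zz n \<rho> (n-1-i) = - zz n \<rho> i"
  unfolding zz_def
  by (cases "2*i+1 < n"; cases "2*i+1 = n") (auto simp: algebra_simps)

lemma rsym: "i < n \<Longrightarrow> \<not> 2*i+1 < n \<Longrightarrow> 2*i+1 \<noteq> n \<Longrightarrow> 2*(n-1-i)+1 < n"
  by linarith

lemma zz_lo: "i < n \<Longrightarrow> -1 \<le> zz n \<rho> i"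
  using dd_nonneg[of i] dd_le1[of "n-1-i"] rsym[of i] unfolding zz_def by auto

lemma zz_hi: "i < n \<Longrightarrow> zz n \<rho> i \<le> 1"
  using dd_nonneg[of "n-1-i"] dd_le1[of i] unfolding zz_def by auto

lemma zz_left: "2*i+1 \<le> n \<Longrightarrow> zz n \<rho> i \<le> 0"
  using dd_le1[of i] unfolding zz_def by auto

lemma zz_right: "i < n \<Longrightarrow> n \<le> 2*i+1 \<Longrightarrow> 0 \<le> zz n \<rho> i"
  using dd_le1[of "n-1-i"] rsym[of i] unfolding zz_def by auto

lemma zz_0: "zz n \<rho> 0 = -1"
  using n2 by (simp add: zz_def dd_def)

lemma zz_last: "zz n \<rho> (n-1) = 1"
  using zz_anti[of 0] zz_0 n2 by simp

lemma zz_mono: "Suc i < n \<Longrightarrow> zz n \<rho> i \<le> zz n \<rho> (Suc i)"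
proof -
  assume h: "Suc i < n"
  consider "2*(Suc i)+1 < n" | "2*i+1 < n" "\<not> 2*(Suc i)+1 < n" | "\<not> 2*i+1 < n" by linarith
  thus ?thesis
  proof cases
    case 1 thus ?thesis using dd_mono[of i "Suc i"] by (simp add: zz_def)
  next
    case 2 thus ?thesis using zz_left[of i] zz_right[of "Suc i"] h by linarith
  next
    case 3
    hence "\<not> 2*(Suc i)+1 < n" by simp
    show ?thesis
    proof (cases "2*i+1 = n")
      case True
      have "0 \<le> zz n \<rho> (Suc i)" using zz_right[of "Suc i"] h True by simp
      moreover have "zz n \<rho> i \<le> 0" using zz_left[of i] True by simp
      ultimately show ?thesis by linarith
    next
      case False
      have "dd n \<rho> (n - 1 - Suc i) \<le> dd n \<rho> (n-1-i)" by (rule dd_mono) auto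
      thus ?thesis using 3 False \<open>\<not> 2*(Suc i)+1 < n\<close> by (simp add: zz_def)
    qed
  qed
qed

definition la :: real where "la = 1 - 2 * \<rho> ^ (n div 2)"

lemma k1: "1 \<le> n div 2" using n2 by linarith

lemma la_props: "1/2 \<le> la" "la < 1" "1 - la = 2 * \<rho> ^ (n div 2)"
proof -
  have "\<rho> ^ (n div 2) \<le> \<rho> ^ 1" using rp r8 k1 by (intro power_decreasing) auto
  moreover have "0 < \<rho> ^ (n div 2)" using rp by simp
  ultimately show "1/2 \<le> la" "la < 1" "1 - la = 2 * \<rho> ^ (n div 2)" using r8 by (auto simp: la_def)
qed

lemma zz_lower_left:
  assumes i: "2*i+1 < n"
  shows "-(1-\<rho>) + \<rho> * zz n \<rho> (i+1) \<le> la * zz n \<rho> i"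
proof -
  let ?k = "n div 2"
  have dl: "dd n \<rho> i \<le> 1" using dd_le1 i by blast
  have la1: "la \<le> 1" "0 \<le> la" using la_props by auto
  have key: "-1 + dd n \<rho> i \<le> la * (-1 + dd n \<rho> i)"
  proof -
    have "(1 - la) * (-1 + dd n \<rho> i) \<le> 0" using la1 dl by (intro mult_nonneg_nonpos) auto
    thus ?thesis by (simp add: algebra_simps)
  qed
  consider "2*(i+1)+1 < n" | "2*(i+1)+1 = n" | "2*(i+1)+1 > n" by linarith
  thus ?thesis
  proof cases
    case 1
    have zi: "zz n \<rho> i = -1 + dd n \<rho> i" "zz n \<rho> (i+1) = -1 + dd n \<rho> (i+1)"
      using 1 i by (auto simp: zz_def)
    have d1: "dd n \<rho> (i+1) \<le> 1" using dd_le1 1 by blast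
    show ?thesis
    proof (cases "i = 0")
      case True
      have "dd n \<rho> 1 = 2 * \<rho> ^ (?k - 1) / (1 + \<rho>)" by (simp add: dd_def)
      also have "\<dots> \<le> 2 * \<rho> ^ (?k - 1)" using rp by (simp add: field_simps)
      finally have "\<rho> * dd n \<rho> 1 \<le> \<rho> * (2 * \<rho> ^ (?k - 1))" using rp by (intro mult_left_mono) auto
      also have "\<dots> = 2 * \<rho> ^ ?k" using k1 by (metis mult.left_commute power_eq_if not_one_le_zero)
      finally have "\<rho> * dd n \<rho> 1 \<le> 1 - la" using la_props by simp
      moreover have "dd n \<rho> 0 = 0" by (simp add: dd_def)
      moreover have "zz n \<rho> 0 = -1 + dd n \<rho> 0" "zz n \<rho> 1 = -1 + dd n \<rho> 1" using zi True by auto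
      ultimately show ?thesis using True by (simp add: ring_distribs)
    next
      case False
      have "dd n \<rho> i = \<rho> * dd n \<rho> (i+1)" using False 1 by (intro dd_step) auto
      moreover have "(1 - la) * (1 - \<rho> * dd n \<rho> (i+1)) \<ge> 0"
        using la1 d1 rp r8 dd_nonneg[of "i+1"] by (intro mult_nonneg_nonneg) (auto intro!: mult_le_one)
      ultimately show ?thesis unfolding zi by (simp add: algebra_simps)
    qed
  next
    case 2
    have zi: "zz n \<rho> i = -1 + dd n \<rho> i" "zz n \<rho> (i+1) = 0" using 2 i by (auto simp: zz_def)
    show ?thesis
    proof (cases "i = 0")
      case True
      hence "?k = 1" using 2 by auto
      thus ?thesis using zi True la_props rp by (simp add: dd_def)
    next
      case False
      hence "?k - i = 1" using 2 by presburger
      hence "dd n \<rho> i = 2 * \<rho> / (1 + \<rho>)" using False by (simp add: dd_def)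
      also have "\<dots> \<ge> \<rho>" using rp r8 by (simp add: field_simps)
      finally show ?thesis using zi key by simp
    qed
  next
    case 3
    hence ev: "n = 2*i+2" using i by simp
    have zi: "zz n \<rho> i = -1 + dd n \<rho> i" "zz n \<rho> (i+1) = 1 - dd n \<rho> i"
      using 3 i ev by (auto simp: zz_def)
    show ?thesis
    proof (cases "i = 0")
      case True
      hence "?k = 1" using ev by simp
      thus ?thesis using zi True la_props rp by (simp add: dd_def)
    next
      case False
      have "?k - i = 1" using ev by simp
      hence dv: "dd n \<rho> i = 2 * \<rho> / (1 + \<rho>)" using False by (simp add: dd_def)
      hence "dd n \<rho> i * (1 + \<rho>) = 2 * \<rho>" using rp by simp
      hence "-(1-\<rho>) + \<rho> * (1 - dd n \<rho> i) = -1 + dd n \<rho> i" by (simp add: algebra_simps)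
      thus ?thesis using zi key by simp
    qed
  qed
qed

lemma zz_step:
  assumes i: "i < n"
  shows "(1-\<rho>) * zz n \<rho> 0 + \<rho> * zz n \<rho> (min (i+1) (n-1)) \<le> la * zz n \<rho> i"
    and "la * zz n \<rho> i \<le> \<rho> * zz n \<rho> (max (i-1) 0) + (1-\<rho>) * zz n \<rho> (n-1)"
proof -
  have la1: "0 \<le> la" "la \<le> 1" using la_props by auto
  show "(1-\<rho>) * zz n \<rho> 0 + \<rho> * zz n \<rho> (min (i+1) (n-1)) \<le> la * zz n \<rho> i"
  proof (cases "2*i+1 < n")
    case True
    hence "min (i+1) (n-1) = i+1" by simp
    thus ?thesis using zz_lower_left[OF True] zz_0 by simp
  next
    case False
    have "zz n \<rho> (min (i+1) (n-1)) \<le> 1" using zz_hi n2 by simp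
    hence "\<rho> * zz n \<rho> (min (i+1) (n-1)) \<le> \<rho>" using rp by (simp add: mult_left_le)
    moreover have "0 \<le> la * zz n \<rho> i" using zz_right[of i] i False la1 by simp
    ultimately show ?thesis using zz_0 r8 by simp
  qed
  show "la * zz n \<rho> i \<le> \<rho> * zz n \<rho> (max (i-1) 0) + (1-\<rho>) * zz n \<rho> (n-1)"
  proof (cases "2*i+1 \<le> n")
    case True
    have "-1 \<le> zz n \<rho> (max (i-1) 0)" using zz_lo i by simp
    hence "-\<rho> \<le> \<rho> * zz n \<rho> (max (i-1) 0)" using rp
      by (metis minus_mult_right mult.right_neutral mult_left_mono less_imp_le)
    moreover have "la * zz n \<rho> i \<le> 0" using zz_left[OF True] la1 by (simp add: mult_nonneg_nonpos)
    ultimately show ?thesis using zz_last r8 by simp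
  next
    case False
    define j where "j = n-1-i"
    have j: "2*j+1 < n" "i = n-1-j" "max (i-1) 0 = n-1-(j+1)" "j < n" "j+1 < n"
      using False i by (auto simp: j_def)
    have "-(1-\<rho>) + \<rho> * zz n \<rho> (j+1) \<le> la * zz n \<rho> j" by (rule zz_lower_left[OF j(1)])
    moreover have "zz n \<rho> i = - zz n \<rho> j" using zz_anti[OF j(4)] j(2) by simp
    moreover have "zz n \<rho> (max (i-1) 0) = - zz n \<rho> (j+1)" using zz_anti[OF j(5)] j(3) by simp
    ultimately show ?thesis using zz_last by simp
  qed
qed

end




definition good :: "nat \<Rightarrow> nat \<Rightarrow> real \<Rightarrow> real \<Rightarrow> real \<Rightarrow> bool" where
  "good n m \<rho> s E \<longleftrightarrow> (\<exists>x P. twist_system n m \<rho> x P \<and> (\<forall>t i. i < n \<longrightarrow> 0 \<le> x t i \<and> x t i \<le> 1)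
      \<and> ennreal E \<le> s_energy s x P)"

lemma aff_comb: "(1-\<rho>)*(h + c*a) + \<rho>*(h + c*b) = h + c*((1-\<rho>)*a + \<rho>*b)" for \<rho> h c a b :: real
  by (simp add: algebra_simps)

lemma base_good:
  assumes n2: "2 \<le> n" and rp: "0 < \<rho>" and r8: "\<rho> \<le> 1/8" and sp: "0 < s"
  shows "good n 1 \<rho> s (1 / (4 * s * \<rho> ^ (n div 2)))"
proof -
  define l where "l = la n \<rho>"
  have lp: "1/2 \<le> l" "l < 1" "1 - l = 2 * \<rho> ^ (n div 2)" using la_props[OF n2 rp r8] by (auto simp: l_def)
  define x where "x t i = 1/2 + (l^t/2) * zz n \<rho> i" for t i
  define P :: "nat \<Rightarrow> (nat \<times> nat) list" where "P t = [(0, n-1)]" for t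
  have zb: "-1 \<le> zz n \<rho> i" "zz n \<rho> i \<le> 1" if "i < n" for i
    using zz_lo[OF n2 rp r8 that] zz_hi[OF n2 rp r8 that] by auto
  have lt: "0 \<le> l^t" "l^t \<le> 1" for t using lp by (auto intro: power_le_one)
  have pos: "0 \<le> x t i \<and> x t i \<le> 1" if "i < n" for t i
  proof -
    have "\<bar>(l^t/2) * zz n \<rho> i\<bar> \<le> 1/2"
    proof -
      have "\<bar>(l^t/2) * zz n \<rho> i\<bar> = (l^t/2) * \<bar>zz n \<rho> i\<bar>" using lt by (simp add: abs_mult)
      also have "\<dots> \<le> (1/2) * 1" using lt zb[OF that] by (intro mult_mono) auto
      finally show ?thesis by simp
    qed
    thus ?thesis unfolding x_def by (simp add: abs_le_iff)
  qed
  have sys: "twist_system n 1 \<rho> x P"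
    unfolding twist_system_def
  proof (intro conjI allI impI)
    fix i assume "i < n" thus "0 \<le> x 0 i" "x 0 i \<le> 1" using pos by auto
  next
    fix t
    show "sorted_pos n (x t)" unfolding sorted_pos_def x_def
      using zz_mono[OF n2 rp r8] lt by (auto intro: mult_left_mono)
    show "twist_partition n 1 (P t)" unfolding twist_partition_def P_def by simp
    show "twist_step \<rho> (P t) (x t) (x (Suc t))"
      unfolding twist_step_def P_def
    proof (clarsimp)
      fix i assume i: "i \<le> n - Suc 0"
      hence i': "i < n" using n2 by simp
      have c: "0 \<le> l^t/2" using lt by simp
      have xs: "x (Suc t) i = 1/2 + (l^t/2) * (l * zz n \<rho> i)" unfolding x_def by simp
      note st = zz_step[OF n2 rp r8 i', folded l_def]
      show "(1 - \<rho>) * x t 0 + \<rho> * x t (min (Suc i) (n - Suc 0)) \<le> x (Suc t) i \<and>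
            x (Suc t) i \<le> \<rho> * x t (i - Suc 0) + (1 - \<rho>) * x t (n - Suc 0)"
      proof
        have "(1 - \<rho>) * x t 0 + \<rho> * x t (min (Suc i) (n - Suc 0)) =
          1/2 + (l^t/2) * ((1-\<rho>) * zz n \<rho> 0 + \<rho> * zz n \<rho> (min (i+1) (n-1)))"
          unfolding x_def by (simp add: field_simps)
        also have "\<dots> \<le> x (Suc t) i" unfolding xs using st(1) c by (intro add_left_mono mult_left_mono) auto
        finally show "(1 - \<rho>) * x t 0 + \<rho> * x t (min (Suc i) (n - Suc 0)) \<le> x (Suc t) i" .
      next
        have "x (Suc t) i \<le> 1/2 + (l^t/2) * (\<rho> * zz n \<rho> (max (i-1) 0) + (1-\<rho>) * zz n \<rho> (n-1))"
          unfolding xs using st(2) c by (intro add_left_mono mult_left_mono) auto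
        also have "\<dots> = \<rho> * x t (i - Suc 0) + (1 - \<rho>) * x t (n - Suc 0)"
          unfolding x_def by (simp add: field_simps)
        finally show "x (Suc t) i \<le> \<rho> * x t (i - Suc 0) + (1 - \<rho>) * x t (n - Suc 0)" .
      qed
    qed
  qed
  have q: "0 \<le> l powr s" "l powr s < 1" using lp sp by (auto simp: powr01_less_one)
  have en: "s_energy s x P = ennreal (1 / (1 - l powr s))"
  proof -
    have "x t (n-1) - x t 0 = l^t" for t
      unfolding x_def using zz_0[OF n2 rp r8] zz_last[OF n2 rp r8] by simp
    hence "s_energy s x P = (\<Sum>t. ennreal (1 * (l powr s)^t))"
      unfolding s_energy_def P_def by (simp add: powr_pow_comm)
    also have "\<dots> = ennreal (1 / (1 - l powr s))" using q by (intro geom_ennreal) auto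
    finally show ?thesis .
  qed
  have "1 - l powr s \<le> s * (1/l - 1)" using lp sp by (intro one_minus_powr_le) auto
  also have "1/l - 1 = (1 - l)/l" using lp by (simp add: field_simps)
  also have "\<dots> \<le> (1-l) * 2"
  proof -
    have h: "(1-l) * 1 \<le> (1-l) * (2*l)" using lp by (intro mult_left_mono) auto
    have "0 < l" using lp by simp
    have eq: "(1-l)*(2*l) = ((1-l)*2)*l" by (simp only: mult.assoc mult.commute mult.left_commute)
    have "1-l \<le> ((1-l)*2)*l" using h eq by (simp only: mult_1_right)
    thus ?thesis using \<open>0 < l\<close> by (subst pos_divide_le_eq) auto
  qed
  finally have "1 - l powr s \<le> 4 * s * \<rho> ^ (n div 2)" using lp sp by (simp add: algebra_simps mult_right_mono)
  hence "1 / (4 * s * \<rho> ^ (n div 2)) \<le> 1 / (1 - l powr s)" using q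
    by (intro divide_left_mono) auto
  hence "ennreal (1 / (4 * s * \<rho> ^ (n div 2))) \<le> s_energy s x P" unfolding en by (rule ennreal_leI)
  thus ?thesis unfolding good_def using sys pos by blast
qed




lemma inv_le2: fixes l :: real assumes "1/2 \<le> l" "l \<le> 1" shows "1/l - 1 \<le> 2*(1-l)"
proof -
  have l0: "0 < l" using assms by simp
  have h: "(1-l) * 1 \<le> (1-l) * (2*l)" using assms by (intro mult_left_mono) auto
  have eq: "(1-l)*(2*l) = (2*(1-l))*l" by (simp only: mult.assoc mult.commute mult.left_commute)
  have "1-l \<le> (2*(1-l))*l" using h eq by (simp only: mult_1_right)
  hence "(1-l)/l \<le> 2*(1-l)" using l0 by (subst pos_divide_le_eq) auto
  moreover have "1/l - 1 = (1-l)/l" using l0 by (simp add: field_simps)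
  ultimately show ?thesis by simp
qed

lemma shift_step:
  assumes st: "twist_step \<rho> Q a b" and b0: "0 \<le> \<beta>"
    and xa: "\<And>i. xa i = (if i = 0 then X else A + \<beta> * a (i-1))"
    and xb: "\<And>i. xb i = (if i = 0 then X else A + \<beta> * b (i-1))"
  shows "twist_step \<rho> ((0,0) # map (\<lambda>(u,v). (Suc u, Suc v)) Q) xa xb"
proof -
  have zero: "(1-\<rho>) * xa 0 + \<rho> * xa (min (0+1) 0) \<le> xb 0 \<and> xb 0 \<le> \<rho> * xa (max (0-1) 0) + (1-\<rho>)*xa 0"
    using xa xb by (simp add: algebra_simps)
  have gen: "(1-\<rho>) * xa (Suc u) + \<rho> * xa (min (i+1) (Suc v)) \<le> xb i \<and>
             xb i \<le> \<rho> * xa (max (i-1) (Suc u)) + (1-\<rho>) * xa (Suc v)"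
    if uv: "(u, v) \<in> set Q" and i: "Suc u \<le> i" "i \<le> Suc v" for u v i
  proof -
    obtain i' where i': "i = Suc i'" using i by (cases i) auto
    have iu: "u \<le> i'" "i' \<le> v" using i i' by auto
    have h: "(1-\<rho>) * a u + \<rho> * a (min (i'+1) v) \<le> b i'" "b i' \<le> \<rho> * a (max (i'-1) u) + (1-\<rho>) * a v"
      using st uv iu unfolding twist_step_def by fastforce+
    have mn: "min (i+1) (Suc v) = Suc (min (i'+1) v)" using i' by simp
    have mx: "max (i - 1) (Suc u) = Suc (max (i'-1) u)" using i' iu by (cases i') auto
    have "(1 - \<rho>) * (A + \<beta> * a u) + \<rho> * (A + \<beta> * a (min (i'+1) v)) = A + \<beta> * ((1-\<rho>) * a u + \<rho> * a (min (i'+1) v))"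
      by (rule aff_comb)
    also have "\<dots> \<le> A + \<beta> * b i'" using h(1) b0 by (intro add_left_mono mult_left_mono)
    finally have L: "(1 - \<rho>) * (A + \<beta> * a u) + \<rho> * (A + \<beta> * a (min (i'+1) v)) \<le> A + \<beta> * b i'" .
    have "A + \<beta> * b i' \<le> A + \<beta> * (\<rho> * a (max (i'-1) u) + (1-\<rho>) * a v)" using h(2) b0 by (intro add_left_mono mult_left_mono)
    also have "\<dots> = \<rho> * (A + \<beta> * a (max (i'-1) u)) + (1 - \<rho>) * (A + \<beta> * a v)"
      by (simp add: algebra_simps)
    finally have U: "A + \<beta> * b i' \<le> \<rho> * (A + \<beta> * a (max (i'-1) u)) + (1 - \<rho>) * (A + \<beta> * a v)" .
    show ?thesis unfolding mn mx using L U i' xa xb by simp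
  qed
  show ?thesis unfolding twist_step_def using gen zero by auto
qed

lemma reset_step:
  fixes xx yy :: "nat \<Rightarrow> real"
  assumes n1: "1 \<le> n'" and rp: "0 < \<rho>" and r8: "\<rho> \<le> 1/8" and L0: "0 \<le> L"
    and xx0: "xx 0 = X" and xxi: "\<And>i. 1 \<le> i \<Longrightarrow> i \<le> n' \<Longrightarrow> X + L \<le> xx i \<and> xx i \<le> X + L + \<rho>*L"
    and yy0: "yy 0 = X + \<rho>*(1+\<rho>)*L"
    and yyi: "\<And>i. 1 \<le> i \<Longrightarrow> i \<le> n' \<Longrightarrow> X + (1-2*\<rho>)*L \<le> yy i \<and> yy i \<le> X + (1-\<rho>)*L"
  shows "twist_step \<rho> [(0, n')] xx yy"
  unfolding twist_step_def
proof (clarsimp)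
  fix i assume i: "i \<le> n'"
  have xb: "X \<le> xx k \<and> xx k \<le> X + (1+\<rho>)*L" if "k \<le> n'" for k
    using xxi[of k] that xx0 L0 rp by (cases "k = 0") (auto simp: algebra_simps)
  have rr: "\<rho>*(1+\<rho>) \<le> 1 - 2*\<rho>" "\<rho>*(1+\<rho>) \<le> 1 - \<rho>"
  proof -
    have "\<rho>*\<rho> \<le> \<rho> * (1/8)" using rp r8 by (intro mult_left_mono) auto
    thus "\<rho>*(1+\<rho>) \<le> 1 - 2*\<rho>" "\<rho>*(1+\<rho>) \<le> 1 - \<rho>" using r8 by (auto simp: algebra_simps)
  qed
  have rr1: "\<rho>*(1+\<rho>)*L \<le> (1 - 2*\<rho>)*L" "\<rho>*(1+\<rho>)*L \<le> (1 - \<rho>)*L"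
    using rr L0 by (auto intro: mult_right_mono)
  let ?K = "xx (min (Suc i) n')"
  have K: "?K \<le> X + (1+\<rho>)*L" using xb[of "min (Suc i) n'"] by simp
  have "\<rho> * ?K \<le> \<rho> * (X + (1+\<rho>)*L)" using K rp by (intro mult_left_mono) auto
  hence low: "(1 - \<rho>) * xx 0 + \<rho> * ?K \<le> X + \<rho>*(1+\<rho>)*L" unfolding xx0 by (simp add: algebra_simps)
  have "X \<le> xx (i - Suc 0)" using xb[of "i - Suc 0"] i by simp
  hence a1: "\<rho> * X \<le> \<rho> * xx (i - Suc 0)" using rp by (intro mult_left_mono) auto
  have "X + L \<le> xx n'" using xxi[of n'] n1 by simp
  hence a2: "(1-\<rho>) * (X + L) \<le> (1-\<rho>) * xx n'" using r8 by (intro mult_left_mono) auto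
  have up: "X + (1-\<rho>)*L \<le> \<rho> * xx (i - Suc 0) + (1 - \<rho>) * xx n'"
    using a1 a2 by (simp add: algebra_simps)
  show "(1 - \<rho>) * xx 0 + \<rho> * ?K \<le> yy i \<and> yy i \<le> \<rho> * xx (i - Suc 0) + (1 - \<rho>) * xx n'"
  proof (cases "i = 0")
    case True
    thus ?thesis using low up yy0 rr1 by simp
  next
    case False
    thus ?thesis using low up yyi[of i] i rr1 by auto
  qed
qed




lemma partition_shift:
  assumes "twist_partition n' m' Q" "1 \<le> n'"
  shows "twist_partition (Suc n') (Suc m') ((0,0) # map (\<lambda>(u,v). (Suc u, Suc v)) Q)"
proof -
  have Q: "Q \<noteq> []" "length Q \<le> m'" "fst (hd Q) = 0" "snd (last Q) = n' - 1"
    "\<And>l. l < length Q \<Longrightarrow> fst (Q ! l) \<le> snd (Q ! l)"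
    "\<And>l. Suc l < length Q \<Longrightarrow> fst (Q ! Suc l) = Suc (snd (Q ! l))"
    using assms(1) unfolding twist_partition_def by auto
  have h0: "fst (Q ! 0) = 0" using Q(1,3) by (simp add: hd_conv_nth)
  have lst: "last (map (\<lambda>(u,v). (Suc u, Suc v)) Q) = (Suc (fst (last Q)), Suc (snd (last Q)))"
    using Q(1) by (simp add: last_map split: prod.splits)
  show ?thesis unfolding twist_partition_def
  proof (intro conjI allI impI)
    show "snd (last ((0, 0) # map (\<lambda>(u, v). (Suc u, Suc v)) Q)) = Suc n' - 1"
      using Q(1,4) assms(2) lst by simp
  next
    fix l assume l: "l < length ((0::nat, 0::nat) # map (\<lambda>(u, v). (Suc u, Suc v)) Q)"
    show "fst (((0, 0) # map (\<lambda>(u, v). (Suc u, Suc v)) Q) ! l) \<le> snd (((0, 0) # map (\<lambda>(u, v). (Suc u, Suc v)) Q) ! l)"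
      using Q(5)[of "l-1"] l by (cases l) (auto split: prod.splits)
  next
    fix l assume l: "Suc l < length ((0::nat, 0::nat) # map (\<lambda>(u, v). (Suc u, Suc v)) Q)"
    show "fst (((0, 0) # map (\<lambda>(u, v). (Suc u, Suc v)) Q) ! Suc l) = Suc (snd (((0, 0) # map (\<lambda>(u, v). (Suc u, Suc v)) Q) ! l))"
      using Q(6)[of "l-1"] l h0 by (cases l) (auto split: prod.splits)
  qed (use Q in auto)
qed




lemma sl_shift: "sum_list (map (\<lambda>(u,v). F u v) (map (\<lambda>(u,v). (Suc u, Suc v)) Q)) = sum_list (map (\<lambda>(u,v). F (Suc u) (Suc v)) Q)"
  by (induction Q) auto

lemma sl_mult: "sum_list (map (\<lambda>(u,v). (c::ennreal) * F u v) Q) = c * sum_list (map (\<lambda>(u,v). F u v) Q)"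
  by (induction Q) (auto simp: distrib_left)

lemma rec_good:
  assumes g: "good n' m' \<rho> s E" and Ep: "0 < E" and n1: "1 \<le> n'"
    and rp: "0 < \<rho>" and r8: "\<rho> \<le> 1/8" and sp: "0 < s" and s1: "s \<le> 1" and sl: "s * ln (1/\<rho>) \<le> 1"
  shows "good (Suc n') (Suc m') \<rho> s (E / (96 * \<rho> * s))"
proof -
  obtain x' P' where sys': "twist_system n' m' \<rho> x' P'"
    and pos': "\<And>t i. i < n' \<Longrightarrow> 0 \<le> x' t i \<and> x' t i \<le> 1"
    and en': "ennreal E \<le> s_energy s x' P'" using g unfolding good_def by blast
  define e' where "e' t = sum_list (map (\<lambda>(u, v). ennreal ((x' t v - x' t u) powr s)) (P' t))" for t
  have "s_energy s x' P' = suminf e'" unfolding s_energy_def e'_def by simp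
  then obtain T where T: "ennreal (E/2) \<le> (\<Sum>t<T. e' t)" using suminf_trunc[OF Ep] en' by auto
  define p where "p = Suc T"
  have p0: "0 < p" by (simp add: p_def)
  define lam :: real where "lam = 1 - 3*\<rho> - \<rho>^2"
  have rr: "\<rho>^2 \<le> \<rho>/8" using rp r8 by (simp add: power2_eq_square mult_left_mono[of \<rho> "1/8" \<rho>, simplified])
  have r2: "0 \<le> \<rho>^2" by simp
  have lam: "1/2 \<le> lam" "lam \<le> 1" "1 - lam \<le> 4*\<rho>" "0 < lam" unfolding lam_def using rr r8 rp r2 by linarith+
  define L where "L j = lam^j / 2" for j :: nat
  define X where "X j = (\<Sum>i<j. \<rho>*(1+\<rho>)*L i)" for j
  define A where "A j = X j + L j" for j
  define \<beta> where "\<beta> j = \<rho> * L j" for j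
  have Lp: "0 < L j" "L j \<le> 1/2" "L (Suc j) = lam * L j" for j
    using lam by (auto simp: L_def power_le_one)
  have Lnn: "0 \<le> L j" for j using Lp(1)[of j] by simp
  have bnn: "0 \<le> \<beta> j" for j using Lnn[of j] rp by (simp add: \<beta>_def)
  have rL: "0 \<le> \<rho> * L j" for j using Lnn[of j] rp by simp
  have tp: "0 \<le> \<rho>*(1+\<rho>)*L i" for i using Lp[of i] rp by simp
  have Xp: "0 \<le> X j" for j unfolding X_def using tp by (simp add: sum_nonneg)
  have XS: "X (Suc j) = X j + \<rho>*(1+\<rho>)*L j" for j unfolding X_def by simp
  have AS: "A (Suc j) = X j + (1-2*\<rho>)*L j" for j
    unfolding A_def XS Lp(3) lam_def by (simp add: algebra_simps power2_eq_square)
  have Ale: "A j \<le> 1/2" for j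
  proof (induction j)
    case 0 thus ?case by (simp add: A_def X_def L_def)
  next
    case (Suc j)
    have "(1-2*\<rho>)*L j \<le> L j" using rL[of j] by (simp add: algebra_simps)
    thus ?case using AS[of j] Suc by (simp add: A_def)
  qed
  define n where "n = Suc n'"
  define x where "x t i = (if i = 0 then X (t div p) else A (t div p) + \<beta> (t div p) * x' (t mod p) (i-1))" for t i
  define P where "P t = (if t mod p < T then (0,0) # map (\<lambda>(u,v). (Suc u, Suc v)) (P' (t mod p)) else [(0, n')])" for t
  have pos: "0 \<le> x t i \<and> x t i \<le> 1" if "i < n" for t i
  proof (cases "i = 0")
    case True thus ?thesis using Xp[of "t div p"] Ale[of "t div p"] Lp[of "t div p"] by (simp add: x_def A_def)
  next
    case False
    let ?j = "t div p"
    have xi: "0 \<le> x' (t mod p) (i-1)" "x' (t mod p) (i-1) \<le> 1" using pos' that False n_def by auto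
    have "0 \<le> \<beta> ?j * x' (t mod p) (i-1)" using xi bnn[of ?j] by simp
    moreover have "\<beta> ?j * x' (t mod p) (i-1) \<le> \<beta> ?j" using xi bnn[of ?j] by (simp add: mult_left_le)
    moreover have "\<beta> ?j \<le> L ?j" unfolding \<beta>_def using Lnn[of ?j] rp r8 by (intro mult_left_le_one_le) auto
    moreover have "L ?j \<le> 1/2" using Lp(2) by blast
    ultimately show ?thesis using False Xp[of ?j] Ale[of ?j] Lp[of ?j] by (simp add: x_def A_def)
  qed
  have sys: "twist_system n (Suc m') \<rho> x P"
    unfolding twist_system_def
  proof (intro conjI allI impI)
    fix i assume "i < n" thus "0 \<le> x 0 i" "x 0 i \<le> 1" using pos by auto
  next
    fix t
    let ?j = "t div p" and ?r = "t mod p"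
    show "sorted_pos n (x t)" unfolding sorted_pos_def
    proof (intro allI impI)
      fix i assume i: "Suc i < n"
      show "x t i \<le> x t (Suc i)"
      proof (cases i)
        case 0
        have "0 \<le> x' ?r 0" using pos' n1 by simp
        hence "0 \<le> \<beta> ?j * x' ?r 0" using bnn[of ?j] by simp
        thus ?thesis using 0 Lnn[of ?j] by (simp add: x_def A_def)
      next
        case (Suc i0)
        have "x' ?r i0 \<le> x' ?r (Suc i0)" using sys' i Suc n_def unfolding twist_system_def sorted_pos_def by auto
        hence "\<beta> ?j * x' ?r i0 \<le> \<beta> ?j * x' ?r (Suc i0)" using bnn by (intro mult_left_mono) auto
        thus ?thesis using Suc by (simp add: x_def)
      qed
    qed
    show "twist_partition n (Suc m') (P t)"
    proof (cases "?r < T")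
      case True
      thus ?thesis using partition_shift[of n' m' "P' ?r"] sys' n1 unfolding P_def n_def twist_system_def by auto
    next
      case False
      thus ?thesis unfolding P_def twist_partition_def n_def by simp
    qed
    have rT: "?r \<le> T" using p0 by (simp add: p_def less_Suc_eq_le)
    show "twist_step \<rho> (P t) (x t) (x (Suc t))"
    proof (cases "?r < T")
      case True
      have sd: "Suc t div p = ?j" "Suc t mod p = Suc ?r" using True by (simp_all add: div_Suc mod_Suc p_def)
      have st': "twist_step \<rho> (P' ?r) (x' ?r) (x' (Suc ?r))" using sys' unfolding twist_system_def by blast
      have "twist_step \<rho> ((0,0) # map (\<lambda>(u,v). (Suc u, Suc v)) (P' ?r)) (x t) (x (Suc t))"
        by (rule shift_step[OF st', of "\<beta> ?j" _ "X ?j" "A ?j"]) (use bnn in \<open>auto simp: x_def sd\<close>)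
      thus ?thesis using True by (simp add: P_def)
    next
      case False
      hence rT': "?r = T" using rT by simp
      have sd: "Suc t div p = Suc ?j" "Suc t mod p = 0" using rT' by (simp_all add: div_Suc mod_Suc p_def)
      have P_eq: "P t = [(0, n')]" using False by (simp add: P_def)
      show ?thesis unfolding P_eq
      proof (rule reset_step[OF n1 rp r8, of "L ?j" _ "X ?j"])
        show "0 \<le> L ?j" using Lp by (simp add: less_imp_le)
        show "x t 0 = X ?j" by (simp add: x_def)
        show "x (Suc t) 0 = X ?j + \<rho> * (1 + \<rho>) * L ?j" by (simp add: x_def sd XS)
      next
        fix i assume i: "1 \<le> i" "i \<le> n'"
        have xi: "0 \<le> x' ?r (i-1)" "x' ?r (i-1) \<le> 1" using pos' i by auto
        have "0 \<le> \<beta> ?j * x' ?r (i-1)" "\<beta> ?j * x' ?r (i-1) \<le> \<rho> * L ?j"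
          using xi Lp[of ?j] rp by (auto simp: \<beta>_def mult_left_le)
        thus "X ?j + L ?j \<le> x t i \<and> x t i \<le> X ?j + L ?j + \<rho> * L ?j"
          using i by (simp add: x_def A_def)
      next
        fix i assume i: "1 \<le> i" "i \<le> n'"
        have xi: "0 \<le> x' 0 (i-1)" "x' 0 (i-1) \<le> 1" using pos' i by auto
        have b1: "\<beta> (Suc ?j) \<le> \<rho> * L ?j" using Lp[of ?j] lam rp
          by (simp add: \<beta>_def mult_left_le_one_le)
        have "0 \<le> \<beta> (Suc ?j) * x' 0 (i-1)" "\<beta> (Suc ?j) * x' 0 (i-1) \<le> \<beta> (Suc ?j)"
          using xi bnn[of "Suc ?j"] by (auto simp: mult_left_le)
        hence "0 \<le> \<beta> (Suc ?j) * x' 0 (i-1)" "\<beta> (Suc ?j) * x' 0 (i-1) \<le> \<rho> * L ?j" using b1 by auto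
        thus "X ?j + (1 - 2 * \<rho>) * L ?j \<le> x (Suc t) i \<and> x (Suc t) i \<le> X ?j + (1 - \<rho>) * L ?j"
          using i by (simp add: x_def sd AS algebra_simps)
      qed
    qed
  qed
  define e where "e t = sum_list (map (\<lambda>(u, v). ennreal ((x t v - x t u) powr s)) (P t))" for t
  have en_eq: "s_energy s x P = suminf e" unfolding s_energy_def e_def ..
  have et: "e (r + j*p) = ennreal (\<beta> j powr s) * e' r" if r: "r < T" for r j
  proof -
    have rp': "r < p" using r by (simp add: p_def)
    have dm: "(r + j*p) div p = j" "(r + j*p) mod p = r" using rp' p0 by simp_all
    have Pe: "P (r + j*p) = (0,0) # map (\<lambda>(u,v). (Suc u, Suc v)) (P' r)" using dm r by (simp add: P_def)
    have pt: "ennreal ((x (r+j*p) (Suc v) - x (r+j*p) (Suc u)) powr s) = ennreal (\<beta> j powr s) * ennreal ((x' r v - x' r u) powr s)" for u v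
    proof -
      have "x (r+j*p) (Suc v) - x (r+j*p) (Suc u) = \<beta> j * (x' r v - x' r u)"
        using rp' by (simp add: x_def dm algebra_simps)
      thus ?thesis by (simp add: powr_mult ennreal_mult)
    qed
    have "e (r + j*p) = sum_list (map (\<lambda>(u,v). ennreal ((x (r+j*p) (Suc v) - x (r+j*p) (Suc u)) powr s)) (P' r))"
      unfolding e_def Pe by (simp del: map_map add: sl_shift[where F="\<lambda>u v. ennreal ((x (r+j*p) v - x (r+j*p) u) powr s)"])
    also have "\<dots> = sum_list (map (\<lambda>(u,v). ennreal (\<beta> j powr s) * ennreal ((x' r v - x' r u) powr s)) (P' r))"
      unfolding pt ..
    also have "\<dots> = ennreal (\<beta> j powr s) * e' r" unfolding sl_mult e'_def ..
    finally show ?thesis .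
  qed
  define q where "q = lam powr s"
  define C where "C = (\<rho>/2) powr s * (E/2)"
  have lam1: "lam < 1" using rp r2 unfolding lam_def by linarith
  have q: "0 \<le> q" "q < 1" using lam lam1 sp by (auto simp: q_def powr01_less_one)
  have bj: "\<beta> j powr s = (\<rho>/2) powr s * q^j" for j
  proof -
    have "\<beta> j = (\<rho>/2) * lam^j" by (simp add: \<beta>_def L_def)
    hence "\<beta> j powr s = (\<rho>/2) powr s * (lam^j) powr s" by (simp only: powr_mult)
    thus ?thesis by (simp only: powr_pow_comm q_def)
  qed
  have inner: "ennreal (C * q^j) \<le> (\<Sum>r<p. e (r + j*p))" for j
  proof -
    have "C * q^j = \<beta> j powr s * (E/2)" by (simp add: C_def bj mult_ac)
    hence "ennreal (C * q^j) = ennreal (\<beta> j powr s * (E/2))" by (simp only:)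
    also have "\<dots> = ennreal (\<beta> j powr s) * ennreal (E/2)"
      using Ep by (intro ennreal_mult) auto
    finally have "ennreal (C * q^j) = ennreal (\<beta> j powr s) * ennreal (E/2)" .
    also have "\<dots> \<le> ennreal (\<beta> j powr s) * (\<Sum>r<T. e' r)" using T by (intro mult_left_mono) auto
    also have "\<dots> = (\<Sum>r<T. e (r + j*p))" by (simp add: et sum_distrib_left)
    also have "\<dots> \<le> (\<Sum>r<p. e (r + j*p))" by (rule sum_mono2) (auto simp: p_def)
    finally show ?thesis .
  qed
  have "(\<Sum>j. ennreal (C * q^j)) \<le> (\<Sum>j. \<Sum>r<p. e (r + j*p))"
    by (rule suminf_le[OF inner]) auto
  also have "\<dots> \<le> suminf e" by (rule suminf_group)
  finally have "(\<Sum>j. ennreal (C * q^j)) \<le> s_energy s x P" unfolding en_eq .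
  moreover have "(\<Sum>j. ennreal (C * q^j)) = ennreal (C / (1 - q))"
    using q Ep by (intro geom_ennreal) (auto simp: C_def)
  ultimately have enC: "ennreal (C / (1 - q)) \<le> s_energy s x P" by simp
  have q1: "1 - q \<le> 8 * \<rho> * s"
  proof -
    have "1 - q \<le> s * (1/lam - 1)" unfolding q_def using lam sp by (intro one_minus_powr_le) auto
    also have "\<dots> \<le> s * (2*(1-lam))" using inv_le2[of lam] lam sp by (intro mult_left_mono) auto
    also have "\<dots> \<le> s * (8 * \<rho>)" using lam sp by (intro mult_left_mono) auto
    finally show ?thesis by (simp add: mult_ac)
  qed
  have c1: "1/3 \<le> \<rho> powr s"
  proof -
    have "ln (1/\<rho>) = - ln \<rho>" using rp by (simp add: ln_div)
    hence "-1 \<le> s * ln \<rho>" using sl by simp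
    hence "exp (-1) \<le> exp (s * ln \<rho>)" by simp
    moreover have "exp (-1) = 1 / exp (1::real)" by (simp add: exp_minus field_simps)
    moreover have "1/3 \<le> 1 / exp (1::real)" using exp_le by (intro divide_left_mono) auto
    ultimately have "1/3 \<le> exp (s * ln \<rho>)" by linarith
    thus ?thesis using rp by (simp add: powr_def)
  qed
  have c2: "1/2 \<le> (1/2::real) powr s"
    using powr_mono'[of s 1 "1/2::real"] s1 by simp
  have "(\<rho>/2) powr s = \<rho> powr s * (1/2) powr s" by (simp add: powr_mult[symmetric])
  moreover have "1/3 * (1/2) \<le> \<rho> powr s * (1/2::real) powr s"
    using c1 c2 by (intro mult_mono) auto
  ultimately have h6: "1/6 \<le> (\<rho>/2) powr s" by simp
  have "1/6 * (E/2) \<le> (\<rho>/2) powr s * (E/2)" using h6 Ep by (intro mult_right_mono) auto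
  hence Cb: "E/12 \<le> C" unfolding C_def by simp
  have "q < 1" by (rule q(2))
  hence "E/12 / (8 * \<rho> * s) \<le> C / (1 - q)"
    using Cb q1 Ep by (intro frac_le) auto
  moreover have "E / (96 * \<rho> * s) = E/12 / (8 * \<rho> * s)" by simp
  ultimately have "ennreal (E / (96 * \<rho> * s)) \<le> ennreal (C / (1 - q))" by (intro ennreal_leI) simp
  also note enC
  finally show ?thesis unfolding good_def n_def[symmetric] using sys pos by blast
qed




lemma aux_pow: "B * (1/c)^m / c = B * (1/c)^(Suc m)" for B c :: real
proof -
  have "B * (1/c)^m / c = B * (1/c)^m * (1/c)" by simp
  also have "\<dots> = B * (1/c)^(Suc m)" by (simp only: power_Suc2 mult.assoc)
  finally show ?thesis .
qed

lemma main_good: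
  assumes rp: "0 < \<rho>" and r8: "\<rho> \<le> 1/8" and sp: "0 < s" and s1: "s \<le> 1" and sl: "s * ln (1/\<rho>) \<le> 1"
  shows "m0 + 2 \<le> n \<Longrightarrow> good n (Suc m0) \<rho> s ((1/(4 * s * \<rho>^((n-m0) div 2))) * (1/(96 * \<rho> * s))^m0)"
proof (induction m0 arbitrary: n)
  case 0
  have "2 \<le> n" using "0.prems" by simp
  hence "good n 1 \<rho> s (1 / (4 * s * \<rho> ^ (n div 2)))" by (rule base_good[OF _ rp r8 sp])
  thus ?case by (simp only: minus_nat.diff_0 power_0 mult_1_right One_nat_def)
next
  case (Suc m0)
  obtain n' where n': "n = Suc n'" using Suc.prems by (cases n) auto
  have "m0 + 2 \<le> n'" using Suc.prems n' by simp
  hence g: "good n' (Suc m0) \<rho> s ((1/(4 * s * \<rho>^((n'-m0) div 2))) * (1/(96 * \<rho> * s))^m0)"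
    by (rule Suc.IH)
  have pos: "0 < (1/(4 * s * \<rho>^((n'-m0) div 2))) * (1/(96 * \<rho> * s))^m0" using rp sp by (intro mult_pos_pos) auto
  have "good (Suc n') (Suc (Suc m0)) \<rho> s ((1/(4 * s * \<rho>^((n'-m0) div 2))) * (1/(96 * \<rho> * s))^m0 / (96 * \<rho> * s))"
  proof (rule rec_good[OF g pos _ rp r8 sp s1 sl])
    show "1 \<le> n'" using Suc.prems n' by simp
  qed
  moreover have "(1/(4 * s * \<rho>^((n'-m0) div 2))) * (1/(96 * \<rho> * s))^m0 / (96 * \<rho> * s) =
      (1/(4 * s * \<rho>^((n - Suc m0) div 2))) * (1/(96 * \<rho> * s))^(Suc m0)"
  proof -
    have h: "n - Suc m0 = n' - m0" using n' by simp
    show ?thesis unfolding h by (rule aux_pow)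
  qed
  ultimately show ?case unfolding n' by (simp only:)
qed

theorem theorem7:
  shows "\<exists>c::real. c > 0 \<and> (\<exists>\<rho>0::real. 0 < \<rho>0 \<and> \<rho>0 \<le> 1/2 \<and>
    (\<forall>(\<rho>::real) (n::nat) (m::nat) (s::real).
       0 < \<rho> \<and> \<rho> \<le> \<rho>0 \<and> 2 \<le> n \<and> 1 \<le> m \<and> m \<le> n - 1 \<and>
       0 < s \<and> s \<le> 1 / (real m * ln (1 / \<rho>)) \<longrightarrow>
       E_TW n \<rho> m s \<ge> ennreal ((c / s) ^ m * (1 / \<rho>) ^ ((n + m - 1) div 2))))"
proof (intro exI conjI allI impI)
  show "(0::real) < 1/96" "(0::real) < 1/8" "(1/8::real) \<le> 1/2" by auto
  fix \<rho> :: real and n m :: nat and s :: real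
  assume h: "0 < \<rho> \<and> \<rho> \<le> 1/8 \<and> 2 \<le> n \<and> 1 \<le> m \<and> m \<le> n - 1 \<and> 0 < s \<and> s \<le> 1 / (real m * ln (1 / \<rho>))"
  hence rp: "0 < \<rho>" and r8: "\<rho> \<le> 1/8" and n2: "2 \<le> n" and m1: "1 \<le> m" and mn: "m \<le> n - 1"
    and sp: "0 < s" and sm: "s \<le> 1 / (real m * ln (1 / \<rho>))" by auto
  obtain m0 where m0: "m = Suc m0" using m1 by (cases m) auto
  have ln1: "1 \<le> ln (1/\<rho>)"
  proof -
    have "\<rho> * exp 1 \<le> \<rho> * 3" using exp_le rp by (intro mult_left_mono) auto
    hence A: "\<rho> * exp 1 \<le> 1" using r8 by linarith
    have "exp 1 \<le> 1/\<rho>" using A rp by (simp add: field_simps)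
    hence "ln (exp 1) \<le> ln (1/\<rho>)" using rp by (subst ln_le_cancel_iff) auto
    thus ?thesis by simp
  qed
  have "s * (real m * ln (1/\<rho>)) \<le> 1" using sm m1 ln1 by (simp add: le_divide_eq mult_ac)
  moreover have "s * ln (1/\<rho>) \<le> s * (real m * ln (1/\<rho>))" using m1 ln1 sp by (simp add: mult_left_le_one_le)
  ultimately have sl: "s * ln (1/\<rho>) \<le> 1" by linarith
  have "s * 1 \<le> s * ln (1/\<rho>)" using ln1 sp by (intro mult_left_mono) auto
  hence s1: "s \<le> 1" using sl by linarith
  have mn2: "m0 + 2 \<le> n" using m0 mn n2 by simp
  have "n + m - 1 = (n - m0) + 2*m0" using m0 mn2 by simp
  hence K: "(n + m - 1) div 2 = (n - m0) div 2 + m0" by simp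
  define F where "F = (1/(4 * s * \<rho>^((n-m0) div 2))) * (1/(96 * \<rho> * s))^m0"
  have g: "good n (Suc m0) \<rho> s F" unfolding F_def by (rule main_good[OF rp r8 sp s1 sl mn2])
  then obtain x P where sys: "twist_system n m \<rho> x P" and en: "ennreal F \<le> s_energy s x P"
    unfolding good_def m0 by blast
  have "s_energy s x P \<le> E_TW n \<rho> m s"
    unfolding E_TW_def using sys by (intro SUP_upper2[of "(x,P)"]) auto
  have bF: "(1/96 / s) ^ m * (1 / \<rho>) ^ ((n + m - 1) div 2) \<le> F"
  proof -
    define k where "k = (n - m0) div 2"
    have e1: "1/(96 * \<rho> * s) = (1/96/s) * (1/\<rho>)" by simp
    have e2: "1/(4 * s * \<rho>^k) = 24 * (1/96/s) * (1/\<rho>)^k" by (simp add: power_one_over)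
    have "F = 24 * (1/96/s) * (1/\<rho>)^k * ((1/96/s)^m0 * (1/\<rho>)^m0)"
      unfolding F_def k_def[symmetric] e1 e2 by (simp only: power_mult_distrib)
    also have "\<dots> = 24 * ((1/96 / s) ^ m * (1 / \<rho>) ^ ((n + m - 1) div 2))"
      unfolding K unfolding m0 k_def[symmetric] by (simp only: power_Suc power_add mult_ac)
    finally have "F = 24 * ((1/96 / s) ^ m * (1 / \<rho>) ^ ((n + m - 1) div 2))" .
    moreover have "0 \<le> (1/96 / s) ^ m * (1 / \<rho>) ^ ((n + m - 1) div 2)" using rp sp by simp
    ultimately show ?thesis by linarith
  qed
  show "ennreal ((1/96 / s) ^ m * (1 / \<rho>) ^ ((n + m - 1) div 2)) \<le> E_TW n \<rho> m s"
    using ennreal_leI[OF bF] en \<open>s_energy s x P \<le> E_TW n \<rho> m s\<close> by (meson order_trans)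
qed



end
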